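(* For the Diverse Population-Based EA on the weighted vertex cover problem with $n$ vertices, a solution $x$ with the two properties (1) $LP(x)=LP(0^n)-Cost(x)$ and (2) there is an optimal solution of the LP for $G(x)$ which assigns $1/2$ to each non-isolated vertex of $G(x)$, is included in the population in expected time $O(n^3)$.
   Context: Weighted vertex cover: $G=(V,E)$, $V=\{v_1,\dots,v_n\}$, $w:V\to\mathbb{N}^+$. Search points $x\in\{0,1\}^n$ ($v_i$ selected iff $x_i=1$); $|x|_1$ is the number of ones. $Cost(x)=\sum_i w(v_i)x_i$; $G(x)=(V(x),E(x))$ with $V(x)=V\setminus\{v_i:x_i=1\}$, $E(x)$ = edges with no selected endpoint. The LP for $G(x)$: minimize $\sum_{v_i\in V(x)}w(v_i)y_i$ s.t. $y_i+y_j\ge1$ for $\{v_i,v_j\}\in E(x)$, $0\le y_i\le1$; $LP(x)$ is its optimal value. Alternative mutation operator on $x$: choose $b\in\{0,1\}$ uniformly; if $b=1$, flip each $x_i$ with probability $1/2$ if $v_i$ is incident to an edge of $E(x)$ and with probability $1/n$ otherwise; if $b=0$, flip each bit independently with probability $1/n$. Diverse Population-Based EA: start with uniformly random $x$, $P=\{x\}$. Each iteration: choose $x\in P$ uniformly; create $x'$ by the alternative mutation operator; add $x'$ to $P$; let $P'=\{y\in P:|y|_1=|x'|_1\}$; let $y_{min_1}\in P'$ minimize $Cost(z)+LP(z)$ and $y_{min_2}\in P'$ minimize $Cost(z)+2LP(z)$ over $P'$; set $P\leftarrow(P\setminus P')\cup\{y_{min_1},y_{min_2}\}$. Time = number of iterations.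 *)

theory Defs
  imports "HOL-Probability.Probability"
begin

text \<open>Vertices are 0..n-1; vertex v_(i+1) of the paper is i here.
  A search point x in {0,1}^n is represented by the set of selected vertices
  (a subset of {..<n}); |x|_1 = card x and 0^n = {}.\<close>

definition wf_graph :: "nat \<Rightarrow> nat set set \<Rightarrow> bool" where
  "wf_graph n E \<longleftrightarrow> (\<forall>e\<in>E. \<exists>i j. i < n \<and> j < n \<and> i \<noteq> j \<and> e = {i, j})"

definition cost :: "(nat \<Rightarrow> nat) \<Rightarrow> nat set \<Rightarrow> real" where
  "cost w x = (\<Sum>i\<in>x. real (w i))"

definition Vx :: "nat \<Rightarrow> nat set \<Rightarrow> nat set" where
  "Vx n x = {..<n} - x"

definition Ex :: "nat set set \<Rightarrow> nat set \<Rightarrow> nat set set" where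
  "Ex E x = {e\<in>E. e \<inter> x = {}}"

definition incident :: "nat set set \<Rightarrow> nat set \<Rightarrow> nat \<Rightarrow> bool" where
  "incident E x i \<longleftrightarrow> (\<exists>e\<in>Ex E x. i \<in> e)"

definition lp_feasible :: "nat \<Rightarrow> nat set set \<Rightarrow> nat set \<Rightarrow> (nat \<Rightarrow> real) \<Rightarrow> bool" where
  "lp_feasible n E x y \<longleftrightarrow>
     (\<forall>i\<in>Vx n x. 0 \<le> y i \<and> y i \<le> 1) \<and>
     (\<forall>e\<in>Ex E x. \<forall>i j. e = {i, j} \<longrightarrow> y i + y j \<ge> 1)"

definition lp_obj :: "nat \<Rightarrow> (nat \<Rightarrow> nat) \<Rightarrow> nat set \<Rightarrow> (nat \<Rightarrow> real) \<Rightarrow> real" where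
  "lp_obj n w x y = (\<Sum>i\<in>Vx n x. real (w i) * y i)"

definition LP :: "nat \<Rightarrow> nat set set \<Rightarrow> (nat \<Rightarrow> nat) \<Rightarrow> nat set \<Rightarrow> real" where
  "LP n E w x = Inf {lp_obj n w x y | y. lp_feasible n E x y}"

definition target :: "nat \<Rightarrow> nat set set \<Rightarrow> (nat \<Rightarrow> nat) \<Rightarrow> nat set \<Rightarrow> bool" where
  "target n E w x \<longleftrightarrow> x \<subseteq> {..<n} \<and>
     LP n E w x = LP n E w {} - cost w x \<and>
     (\<exists>y. lp_feasible n E x y \<and> lp_obj n w x y = LP n E w x \<and>
          (\<forall>i\<in>Vx n x. incident E x i \<longrightarrow> y i = 1/2))"

definition flip_bits :: "nat \<Rightarrow> (nat \<Rightarrow> real) \<Rightarrow> nat set \<Rightarrow> nat set pmf" where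
  "flip_bits n p x = map_pmf (\<lambda>f. let F = {i. f i} in (x - F) \<union> (F - x))
                         (Pi_pmf {..<n} False (\<lambda>i. bernoulli_pmf (p i)))"

definition alt_mutation :: "nat \<Rightarrow> nat set set \<Rightarrow> nat set \<Rightarrow> nat set pmf" where
  "alt_mutation n E x = do {
     b \<leftarrow> bernoulli_pmf (1/2);
     if b then flip_bits n (\<lambda>i. if incident E x i then 1/2 else 1 / real n) x
     else flip_bits n (\<lambda>i. 1 / real n) x }"

definition valid_sel :: "(nat set set \<Rightarrow> (nat set \<Rightarrow> real) \<Rightarrow> nat set) \<Rightarrow> bool" where
  "valid_sel sel \<longleftrightarrow> (\<forall>S f. finite S \<and> S \<noteq> {} \<longrightarrow>
      sel S f \<in> S \<and> (\<forall>z\<in>S. f (sel S f) \<le> f z))"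

definition update :: "nat \<Rightarrow> nat set set \<Rightarrow> (nat \<Rightarrow> nat) \<Rightarrow>
    (nat set set \<Rightarrow> (nat set \<Rightarrow> real) \<Rightarrow> nat set) \<Rightarrow> nat set set \<Rightarrow> nat set \<Rightarrow> nat set set" where
  "update n E w sel P x' =
     (let P1 = insert x' P;
          P' = {y\<in>P1. card y = card x'};
          y1 = sel P' (\<lambda>z. cost w z + LP n E w z);
          y2 = sel P' (\<lambda>z. cost w z + 2 * LP n E w z)
      in (P1 - P') \<union> {y1, y2})"

definition ea_step :: "nat \<Rightarrow> nat set set \<Rightarrow> (nat \<Rightarrow> nat) \<Rightarrow>
    (nat set set \<Rightarrow> (nat set \<Rightarrow> real) \<Rightarrow> nat set) \<Rightarrow> nat set set \<Rightarrow> nat set set pmf" where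
  "ea_step n E w sel P = do {
     x \<leftarrow> pmf_of_set P;
     x' \<leftarrow> alt_mutation n E x;
     return_pmf (update n E w sel P x') }"

definition hit :: "nat \<Rightarrow> nat set set \<Rightarrow> (nat \<Rightarrow> nat) \<Rightarrow> nat set set \<Rightarrow> bool" where
  "hit n E w P \<longleftrightarrow> (\<exists>x\<in>P. target n E w x)"

primrec stopped_pop :: "nat \<Rightarrow> nat set set \<Rightarrow> (nat \<Rightarrow> nat) \<Rightarrow>
    (nat set set \<Rightarrow> (nat set \<Rightarrow> real) \<Rightarrow> nat set) \<Rightarrow> nat \<Rightarrow> nat set set pmf" where
  "stopped_pop n E w sel 0 = map_pmf (\<lambda>x. {x}) (pmf_of_set (Pow {..<n}))"
| "stopped_pop n E w sel (Suc t) = stopped_pop n E w sel t \<bind>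
     (\<lambda>P. if hit n E w P then return_pmf P else ea_step n E w sel P)"

text \<open>Expected hitting time  E[T] = sum_{t>=0} Pr[T > t].\<close>
definition expected_hitting_time :: "nat \<Rightarrow> nat set set \<Rightarrow> (nat \<Rightarrow> nat) \<Rightarrow>
    (nat set set \<Rightarrow> (nat set \<Rightarrow> real) \<Rightarrow> nat set) \<Rightarrow> ennreal" where
  "expected_hitting_time n E w sel =
     (\<Sum>t. emeasure (measure_pmf (stopped_pop n E w sel t)) {P. \<not> hit n E w P})"

end

theory Submission
  imports Defs
begin


lemma feas_one: "lp_feasible n E x (\<lambda>_. 1)"
  by (auto simp: lp_feasible_def)

lemma obj_nonneg: "lp_feasible n E x y \<Longrightarrow> 0 \<le> lp_obj n w x y"
  unfolding lp_feasible_def lp_obj_def by (auto intro!: sum_nonneg)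

lemma LP_le: "lp_feasible n E x y \<Longrightarrow> LP n E w x \<le> lp_obj n w x y"
  unfolding LP_def
  by (rule cInf_lower) (auto intro!: bdd_belowI[where m=0] obj_nonneg)

lemma LP_ge: "(\<And>y. lp_feasible n E x y \<Longrightarrow> c \<le> lp_obj n w x y) \<Longrightarrow> c \<le> LP n E w x"
  unfolding LP_def
  by (rule cInf_greatest) (use feas_one[of n E x] in auto)

lemma LP_nonneg: "0 \<le> LP n E w x"
  by (rule LP_ge) (rule obj_nonneg)

lemma wf_edge: "wf_graph n E \<Longrightarrow> e \<in> E \<Longrightarrow> \<exists>i j. i < n \<and> j < n \<and> i \<noteq> j \<and> e = {i, j}"
  unfolding wf_graph_def by auto

lemma LP_lower:
  assumes wf: "wf_graph n E" and x: "x \<subseteq> {..<n}"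
  shows "LP n E w {} \<le> cost w x + LP n E w x"
proof -
  have "LP n E w {} - cost w x \<le> LP n E w x"
  proof (rule LP_ge)
    fix z assume fz: "lp_feasible n E x z"
    define z' where "z' = (\<lambda>i. if i \<in> x then 1 else z i)"
    have f': "lp_feasible n E {} z'"
      unfolding lp_feasible_def
    proof (intro conjI ballI allI impI)
      fix i assume "i \<in> Vx n {}"
      then show "0 \<le> z' i" "z' i \<le> 1" using fz by (auto simp: z'_def lp_feasible_def Vx_def)
    next
      fix e i j assume e: "e \<in> Ex E {}" "e = {i, j}"
      have "e \<in> E" using e by (simp add: Ex_def)
      then obtain a b where ab: "a < n" "b < n" "a \<noteq> b" "e = {a,b}" using wf_edge[OF wf] by blast
      have ij: "i < n" "j < n" using ab e by (metis doubleton_eq_iff)+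
      show "1 \<le> z' i + z' j"
      proof (cases "e \<inter> x = {}")
        case True
        then have "e \<in> Ex E x" using e by (auto simp: Ex_def)
        then show ?thesis using fz True e by (auto simp: lp_feasible_def z'_def)
      next
        case False
        then have "i \<in> x \<or> j \<in> x" using e by auto
        then show ?thesis using fz ij by (auto simp: lp_feasible_def z'_def Vx_def)
      qed
    qed
    have "lp_obj n w {} z' = cost w x + lp_obj n w x z"
    proof -
      have split: "{..<n} = x \<union> Vx n x" "x \<inter> Vx n x = {}" using x by (auto simp: Vx_def)
      have "lp_obj n w {} z' = (\<Sum>i\<in>x \<union> Vx n x. real (w i) * z' i)"
        unfolding lp_obj_def Vx_def using split by (simp add: Vx_def)
      also have "\<dots> = (\<Sum>i\<in>x. real (w i) * z' i) + (\<Sum>i\<in>Vx n x. real (w i) * z' i)"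
        using split x by (intro sum.union_disjoint) (auto intro: finite_subset simp: Vx_def)
      also have "(\<Sum>i\<in>x. real (w i) * z' i) = cost w x" by (simp add: z'_def cost_def)
      also have "(\<Sum>i\<in>Vx n x. real (w i) * z' i) = lp_obj n w x z"
        unfolding lp_obj_def by (intro sum.cong) (auto simp: z'_def Vx_def)
      finally show ?thesis .
    qed
    with LP_le[OF f', of w] show "LP n E w {} - cost w x \<le> lp_obj n w x z" by simp
  qed
  then show ?thesis by simp
qed

lemma LP_attained:
  shows "\<exists>y. lp_feasible n E x y \<and> lp_obj n w x y = LP n E w x"
proof -
  define B where "B = (\<lambda>i::nat. {0..1::real})"
  define S where "S = Pi UNIV B \<inter> {y. \<forall>e i j. e \<in> Ex E x \<and> e = {i,j} \<longrightarrow> 1 \<le> y i + y j}"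
  have "compactin (product_topology (\<lambda>i. euclidean) UNIV) (PiE UNIV B)"
    by (subst compactin_PiE) (auto simp: B_def)
  then have cB: "compact (Pi UNIV B)"
    by (simp add: euclidean_product_topology PiE_UNIV_domain)
  have cl: "closed {y::nat\<Rightarrow>real. \<forall>e i j. e \<in> Ex E x \<and> e = {i,j} \<longrightarrow> 1 \<le> y i + y j}"
    by (intro closed_Collect_all closed_Collect_imp closed_Collect_le continuous_intros) auto
  have cS: "compact S" unfolding S_def using cB cl by (rule compact_Int_closed)
  have fS: "\<And>y. y \<in> S \<Longrightarrow> lp_feasible n E x y"
    unfolding S_def lp_feasible_def B_def by (auto simp: Pi_def)
  have "(\<lambda>_. 1) \<in> S \<or> True" by simp
  define one where "one = (\<lambda>i::nat. (1::real))"
  have oneS: "one \<in> S" unfolding S_def B_def one_def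
    by (auto simp: Ex_def Vx_def)
  have "continuous_on S (lp_obj n w x)"
    unfolding lp_obj_def by (intro continuous_intros continuous_on_product_then_coordinatewise continuous_on_id)
  then obtain y where yS: "y \<in> S" and ymin: "\<And>z. z \<in> S \<Longrightarrow> lp_obj n w x y \<le> lp_obj n w x z"
    using continuous_attains_inf[OF cS] oneS by blast
  have "LP n E w x = lp_obj n w x y"
  proof (rule antisym)
    show "LP n E w x \<le> lp_obj n w x y" using LP_le fS yS by blast
    show "lp_obj n w x y \<le> LP n E w x"
    proof (rule LP_ge)
      fix z assume fz: "lp_feasible n E x z"
      define z' where "z' = (\<lambda>i. if i \<in> Vx n x then z i else 1)"
      have "z' \<in> S" using fz unfolding S_def B_def z'_def lp_feasible_def
        by (auto simp: Ex_def Vx_def)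
      moreover have "lp_obj n w x z' = lp_obj n w x z" unfolding lp_obj_def z'_def
        by (intro sum.cong) auto
      ultimately show "lp_obj n w x y \<le> lp_obj n w x z" using ymin by metis
    qed
  qed
  then show ?thesis using fS yS by auto
qed




lemma finite_Vx: "finite (Vx n x)" by (simp add: Vx_def)

lemma line_trick:
  assumes wf: "wf_graph n E"
    and fz: "lp_feasible n E x z" and oz: "lp_obj n w x z = LP n E w x"
    and no: "\<not>(\<exists>y. lp_feasible n E x y \<and> lp_obj n w x y = LP n E w x \<and>
                 (\<forall>i\<in>Vx n x. incident E x i \<longrightarrow> y i = 1/2))"
  shows "\<exists>y v. lp_feasible n E x y \<and> lp_obj n w x y = LP n E w x \<and> v \<in> Vx n x \<and> y v = 1"
proof -
  define z0 where "z0 = (\<lambda>i. if incident E x i then z i else 0)"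
  define h where "h = (\<lambda>i. if incident E x i then 1/2 else (0::real))"
  have inc_edge: "\<And>e i j. e \<in> Ex E x \<Longrightarrow> e = {i,j} \<Longrightarrow> incident E x i \<and> incident E x j"
    by (auto simp: incident_def)
  have fz0: "lp_feasible n E x z0"
    using fz inc_edge unfolding lp_feasible_def z0_def by auto
  have "lp_obj n w x z0 \<le> lp_obj n w x z"
    unfolding lp_obj_def z0_def using fz
    by (intro sum_mono) (auto simp: lp_feasible_def)
  with LP_le[OF fz0, of w] oz have oz0: "lp_obj n w x z0 = LP n E w x" by linarith
  have fh: "lp_feasible n E x h"
    using inc_edge unfolding lp_feasible_def h_def by auto
  have hge: "lp_obj n w x z0 \<le> lp_obj n w x h" using oz0 LP_le[OF fh, of w] by simp
  from no fz0 oz0 obtain u where u: "u \<in> Vx n x" "incident E x u" "z0 u \<noteq> 1/2" by blast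
  define D where "D = (\<lambda>i. \<bar>z0 i - h i\<bar>)"
  define \<delta> where "\<delta> = Max (D ` Vx n x)"
  have Dle: "\<And>i. i \<in> Vx n x \<Longrightarrow> D i \<le> \<delta>" unfolding \<delta>_def by (simp add: finite_Vx)
  have "\<delta> \<in> D ` Vx n x" unfolding \<delta>_def using u(1) by (intro Max_in) (auto simp: finite_Vx)
  then obtain m where m: "m \<in> Vx n x" "D m = \<delta>" by auto
  have Dpos: "D u > 0" using u by (simp add: D_def h_def)
  have dpos: "\<delta> > 0" using Dle[OF u(1)] Dpos by linarith
  have Dhalf: "\<And>i. i \<in> Vx n x \<Longrightarrow> D i \<le> 1/2"
    using fz0 unfolding D_def h_def lp_feasible_def by (auto simp: z0_def abs_if)
  have dhalf: "\<delta> \<le> 1/2" using m Dhalf by metis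
  define T where "T = 1 / (2 * \<delta>)"
  have T1: "T \<ge> 1" using dpos dhalf by (simp add: T_def field_simps)
  have Td: "T * \<delta> = 1/2" using dpos by (simp add: T_def)
  define yT where "yT = (\<lambda>i. h i + T * (z0 i - h i))"
  have minc: "incident E x m"
  proof (rule ccontr)
    assume "\<not> incident E x m" then have "D m = 0" by (simp add: D_def h_def z0_def)
    with m dpos show False by simp
  qed
  have bnd: "\<And>i. i \<in> Vx n x \<Longrightarrow> \<bar>T * (z0 i - h i)\<bar> \<le> 1/2"
  proof -
    fix i assume i: "i \<in> Vx n x"
    have "\<bar>T * (z0 i - h i)\<bar> = T * D i" using T1 by (simp add: D_def abs_mult)
    also have "\<dots> \<le> T * \<delta>" using Dle[OF i] T1 by (intro mult_left_mono) auto
    finally show "\<bar>T * (z0 i - h i)\<bar> \<le> 1/2" using Td by simp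
  qed
  have fyT: "lp_feasible n E x yT"
    unfolding lp_feasible_def
  proof (intro conjI ballI allI impI)
    fix i assume i: "i \<in> Vx n x"
    have b: "\<bar>T * (z0 i - h i)\<bar> \<le> 1/2" using bnd[OF i] .
    show "0 \<le> yT i"
    proof (cases "incident E x i")
      case True
      then have "yT i = 1/2 + T * (z0 i - h i)" by (simp add: yT_def h_def)
      then show ?thesis using b by (simp add: abs_le_iff)
    next
      case False
      then show ?thesis by (simp add: yT_def h_def z0_def)
    qed
    show "yT i \<le> 1"
    proof (cases "incident E x i")
      case True
      then have "yT i = 1/2 + T * (z0 i - h i)" by (simp add: yT_def h_def)
      then show ?thesis using b by (simp add: abs_le_iff)
    next
      case False
      then show ?thesis by (simp add: yT_def h_def z0_def)
    qed
  next
    fix e i j assume e: "e \<in> Ex E x" "e = {i,j}"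
    with inc_edge have ii: "incident E x i" "incident E x j" by blast+
    have s1: "1 \<le> z0 i + z0 j" using fz0 e by (auto simp: lp_feasible_def)
    have "yT i + yT j = 1 + T * (z0 i + z0 j - 1)" using ii
      by (simp add: yT_def h_def algebra_simps)
    moreover have "0 \<le> T * (z0 i + z0 j - 1)" using s1 T1 by simp
    ultimately show "1 \<le> yT i + yT j" by linarith
  qed
  have "lp_obj n w x yT = lp_obj n w x h + T * (lp_obj n w x z0 - lp_obj n w x h)"
    unfolding lp_obj_def yT_def
    by (simp add: algebra_simps sum.distrib sum_distrib_left sum_subtractf)
  also have "\<dots> \<le> lp_obj n w x z0"
  proof -
    have "T * (lp_obj n w x z0 - lp_obj n w x h) \<le> 1 * (lp_obj n w x z0 - lp_obj n w x h)"
      using T1 hge by (intro mult_right_mono_neg) auto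
    then show ?thesis by simp
  qed
  finally have oyT: "lp_obj n w x yT = LP n E w x" using oz0 LP_le[OF fyT, of w] by linarith
  have "\<bar>T * (z0 m - h m)\<bar> = 1/2"
    using m T1 Td by (simp add: D_def abs_mult)
  then have "T * (z0 m - h m) = 1/2 \<or> T * (z0 m - h m) = -1/2" by (auto simp: abs_if split: if_splits)
  moreover have "yT m = 1/2 + T * (z0 m - h m)" using minc by (simp add: yT_def h_def)
  ultimately have ym: "yT m = 0 \<or> yT m = 1" by auto
  show ?thesis
  proof (cases "yT m = 1")
    case True then show ?thesis using fyT oyT m by blast
  next
    case False
    with ym have y0: "yT m = 0" by simp
    from minc obtain e where e: "e \<in> Ex E x" "m \<in> e" by (auto simp: incident_def)
    then have "e \<in> E" by (simp add: Ex_def)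
    then obtain a b where ab: "a < n" "b < n" "a \<noteq> b" "e = {a,b}" using wf_edge[OF wf] by blast
    then obtain m' where m': "e = {m, m'}" "m' < n" using e by auto
    have "m' \<notin> x" using e m' by (auto simp: Ex_def)
    then have m'V: "m' \<in> Vx n x" using m' by (simp add: Vx_def)
    have "1 \<le> yT m + yT m'" using fyT e m' by (auto simp: lp_feasible_def)
    moreover have "yT m' \<le> 1" using fyT m'V by (auto simp: lp_feasible_def)
    ultimately have "yT m' = 1" using y0 by simp
    then show ?thesis using fyT oyT m'V by blast
  qed
qed

lemma step_up:
  assumes fy: "lp_feasible n E x y" and oy: "lp_obj n w x y = LP n E w x"
    and v: "v \<in> Vx n x" "y v = 1"
    and p1: "cost w x + LP n E w x = LP n E w {}"
    and wf: "wf_graph n E" and xs: "x \<subseteq> {..<n}"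
  shows "cost w (insert v x) + LP n E w (insert v x) = LP n E w {}"
proof -
  have vx: "v \<notin> x" "v < n" using v by (auto simp: Vx_def)
  have fy': "lp_feasible n E (insert v x) y"
    using fy unfolding lp_feasible_def by (auto simp: Vx_def Ex_def)
  have VV: "Vx n (insert v x) = Vx n x - {v}" by (auto simp: Vx_def)
  have "lp_obj n w (insert v x) y = lp_obj n w x y - real (w v)"
    unfolding lp_obj_def VV using v by (simp add: sum_diff1 finite_Vx)
  moreover have "cost w (insert v x) = cost w x + real (w v)"
    using vx xs by (simp add: cost_def finite_subset)
  moreover have "insert v x \<subseteq> {..<n}" using vx xs by auto
  note LP_lower[OF wf this, of w]
  ultimately show ?thesis using LP_le[OF fy', of w] oy p1 by linarith
qed

lemma improve:
  assumes wf: "wf_graph n E" and xs: "x \<subseteq> {..<n}"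
    and p1: "cost w x + LP n E w x = LP n E w {}"
    and nt: "\<not> target n E w x"
  shows "\<exists>v\<in>Vx n x. cost w (insert v x) + LP n E w (insert v x) = LP n E w {}"
proof -
  obtain z where z: "lp_feasible n E x z" "lp_obj n w x z = LP n E w x" using LP_attained by blast
  have no: "\<not>(\<exists>y. lp_feasible n E x y \<and> lp_obj n w x y = LP n E w x \<and>
                 (\<forall>i\<in>Vx n x. incident E x i \<longrightarrow> y i = 1/2))"
    using nt xs p1 by (auto simp: target_def)
  from line_trick[OF wf z no] obtain y v where
    "lp_feasible n E x y" "lp_obj n w x y = LP n E w x" "v \<in> Vx n x" "y v = 1" by blast
  from step_up[OF this p1 wf xs] \<open>v \<in> Vx n x\<close> show ?thesis by blast
qed




definition p1 :: "nat \<Rightarrow> nat set set \<Rightarrow> (nat \<Rightarrow> nat) \<Rightarrow> nat set \<Rightarrow> bool" where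
  "p1 n E w x \<longleftrightarrow> cost w x + LP n E w x = LP n E w {}"

definition Inv :: "nat \<Rightarrow> nat set set \<Rightarrow> bool" where
  "Inv n P \<longleftrightarrow> finite P \<and> P \<noteq> {} \<and> (\<forall>x\<in>P. x \<subseteq> {..<n}) \<and> (\<forall>k. card {y\<in>P. card y = k} \<le> 2)"

definition phi' :: "nat \<Rightarrow> nat set \<Rightarrow> nat set \<Rightarrow> nat" where
  "phi' n A B = (if B \<noteq> {} then n + 1 + Max B else n - Min A)"

definition phi :: "nat \<Rightarrow> nat set set \<Rightarrow> (nat \<Rightarrow> nat) \<Rightarrow> nat set set \<Rightarrow> nat" where
  "phi n E w P = phi' n (card ` P) (card ` {x\<in>P. p1 n E w x})"

lemma card_sub_le: "x \<subseteq> {..<n} \<Longrightarrow> card x \<le> n"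
  using card_mono[of "{..<n}" x] by simp

lemma Inv_card:
  assumes "Inv n P" shows "card P \<le> 2 * (n + 1)"
proof -
  have "P \<subseteq> (\<Union>k\<in>{..n}. {y\<in>P. card y = k})"
    using assms card_sub_le by (fastforce simp: Inv_def)
  then have "card P \<le> card (\<Union>k\<in>{..n}. {y\<in>P. card y = k})"
    by (intro card_mono) (use assms in \<open>auto simp: Inv_def\<close>)
  also have "\<dots> \<le> (\<Sum>k\<in>{..n}. card {y\<in>P. card y = k})" by (rule card_UN_le) simp
  also have "\<dots> \<le> (\<Sum>k\<in>{..n}. 2)" using assms by (intro sum_mono) (auto simp: Inv_def)
  finally show ?thesis by simp
qed

lemma p1_empty: "p1 n E w {}" by (simp add: p1_def cost_def)

lemma update_props:
  fixes w :: "nat \<Rightarrow> nat"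
  assumes inv: "Inv n P" and x': "x' \<subseteq> {..<n}" and sel: "valid_sel sel" and wf: "wf_graph n E"
  defines "Q \<equiv> update n E w sel P x'"
  shows "Q \<subseteq> insert x' P" "card ` Q = card ` insert x' P"
    "card ` {z\<in>Q. p1 n E w z} = card ` {z\<in>insert x' P. p1 n E w z}" "Inv n Q"
proof -
  define P1 where "P1 = insert x' P"
  define P' where "P' = {y\<in>P1. card y = card x'}"
  define y1 where "y1 = sel P' (\<lambda>z. cost w z + LP n E w z)"
  define y2 where "y2 = sel P' (\<lambda>z. cost w z + 2 * LP n E w z)"
  have Qeq: "Q = (P1 - P') \<union> {y1, y2}"
    unfolding Q_def update_def P1_def P'_def y1_def y2_def Let_def ..
  have finP: "finite P" using inv by (simp add: Inv_def)
  have P'fin: "finite P'" "P' \<noteq> {}" using finP by (auto simp: P'_def P1_def)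
  have vs: "\<And>S f. finite S \<Longrightarrow> S \<noteq> {} \<Longrightarrow> sel S f \<in> S \<and> (\<forall>z\<in>S. f (sel S f) \<le> f z)"
    using sel unfolding valid_sel_def by blast
  have y1in: "y1 \<in> P'" using vs[OF P'fin] by (simp add: y1_def)
  have y1min: "\<And>z. z \<in> P' \<Longrightarrow> cost w y1 + LP n E w y1 \<le> cost w z + LP n E w z"
    using vs[OF P'fin, of "\<lambda>z. cost w z + LP n E w z"] unfolding y1_def[symmetric] by blast
  have y2: "y2 \<in> P'" using vs[OF P'fin] by (simp add: y2_def)
  have sub: "\<And>z. z \<in> P1 \<Longrightarrow> z \<subseteq> {..<n}" using inv x' by (auto simp: P1_def Inv_def)
  show QP: "Q \<subseteq> insert x' P" using y1in y2 by (auto simp: Qeq P'_def P1_def)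
  show "card ` Q = card ` insert x' P"
  proof
    show "card ` Q \<subseteq> card ` insert x' P" using QP by auto
    show "card ` insert x' P \<subseteq> card ` Q"
    proof
      fix k assume "k \<in> card ` insert x' P"
      then obtain z where z: "z \<in> P1" "k = card z" by (auto simp: P1_def)
      show "k \<in> card ` Q"
      proof (cases "card z = card x'")
        case True then have "card y1 = k" using y1in z by (simp add: P'_def)
        then show ?thesis by (auto simp: Qeq)
      next
        case False then have "z \<in> Q" using z by (auto simp: Qeq P'_def)
        then show ?thesis using z by auto
      qed
    qed
  qed
  show "card ` {z\<in>Q. p1 n E w z} = card ` {z\<in>insert x' P. p1 n E w z}"
  proof
    show "card ` {z\<in>Q. p1 n E w z} \<subseteq> card ` {z\<in>insert x' P. p1 n E w z}" using QP by auto
    show "card ` {z\<in>insert x' P. p1 n E w z} \<subseteq> card ` {z\<in>Q. p1 n E w z}"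
    proof
      fix k assume "k \<in> card ` {z\<in>insert x' P. p1 n E w z}"
      then obtain z where z: "z \<in> P1" "p1 n E w z" "k = card z" by (auto simp: P1_def)
      show "k \<in> card ` {z\<in>Q. p1 n E w z}"
      proof (cases "card z = card x'")
        case True
        then have zP': "z \<in> P'" using z by (simp add: P'_def)
        have "y1 \<in> P1" using y1in by (simp add: P'_def)
        then have "LP n E w {} \<le> cost w y1 + LP n E w y1" using LP_lower[OF wf sub] by blast
        moreover have "cost w y1 + LP n E w y1 \<le> LP n E w {}" using y1min[OF zP'] z by (simp add: p1_def)
        ultimately have "p1 n E w y1" by (simp add: p1_def)
        moreover have "card y1 = k" using y1in z True by (simp add: P'_def)
        ultimately show ?thesis by (auto simp: Qeq)
      next
        case False then have "z \<in> Q" using z by (auto simp: Qeq P'_def)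
        then show ?thesis using z by auto
      qed
    qed
  qed
  show "Inv n Q" unfolding Inv_def
  proof (intro conjI allI ballI)
    show "finite Q" using finP by (simp add: Qeq P1_def)
    show "Q \<noteq> {}" by (simp add: Qeq)
    show "\<And>z. z \<in> Q \<Longrightarrow> z \<subseteq> {..<n}" using QP sub by (auto simp: P1_def)
    fix k
    show "card {y\<in>Q. card y = k} \<le> 2"
    proof (cases "k = card x'")
      case True
      then have "{y\<in>Q. card y = k} \<subseteq> {y1, y2}" by (auto simp: Qeq P'_def)
      then have "card {y\<in>Q. card y = k} \<le> card {y1, y2}" by (intro card_mono) auto
      also have "\<dots> \<le> 2" by (simp add: card_insert_le_m1)
      finally show ?thesis .
    next
      case False
      then have "{y\<in>Q. card y = k} \<subseteq> {y\<in>P. card y = k}"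
        using y1in y2 by (auto simp: Qeq P'_def P1_def)
      then have "card {y\<in>Q. card y = k} \<le> card {y\<in>P. card y = k}"
        using finP by (intro card_mono) auto
      then show ?thesis using inv by (auto simp: Inv_def intro: order_trans)
    qed
  qed
qed

lemma phi_update:
  assumes "Inv n P" "x' \<subseteq> {..<n}" "valid_sel sel" "wf_graph n E"
  shows "phi n E w (update n E w sel P x') = phi n E w (insert x' P)"
  using update_props[OF assms, where w=w] by (simp add: phi_def)

lemma phi_bound:
  assumes "\<forall>x\<in>P. x \<subseteq> {..<n}" "finite P"
  shows "phi n E w P \<le> 2 * n + 1"
proof -
  have "\<And>k. k \<in> card ` {x\<in>P. p1 n E w x} \<Longrightarrow> k \<le> n" using assms card_sub_le by auto
  then have "card ` {x\<in>P. p1 n E w x} \<noteq> {} \<Longrightarrow> Max (card ` {x\<in>P. p1 n E w x}) \<le> n"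
    using assms by (intro Max.boundedI) auto
  then show ?thesis by (auto simp: phi_def phi'_def)
qed

lemma phi_mono:
  assumes "finite P" "P \<noteq> {}" "\<forall>x\<in>P. x \<subseteq> {..<n}"
  shows "phi n E w P \<le> phi n E w (insert x' P)"
proof -
  let ?A = "card ` P" and ?A' = "card ` insert x' P"
  let ?B = "card ` {x\<in>P. p1 n E w x}" and ?B' = "card ` {x\<in>insert x' P. p1 n E w x}"
  have fin: "finite ?B" "finite ?B'" "finite ?A" "finite ?A'" using assms by auto
  have BB: "?B \<subseteq> ?B'" and AA: "?A \<subseteq> ?A'" by auto
  show ?thesis
  proof (cases "?B = {}")
    case False
    then have "?B' \<noteq> {}" using BB by auto
    moreover have "Max ?B \<le> Max ?B'" using False BB fin by (intro Max_mono) auto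
    ultimately show ?thesis using False by (simp add: phi_def phi'_def)
  next
    case True
    show ?thesis
    proof (cases "?B' = {}")
      case True2: True
      have "Min ?A' \<le> Min ?A" using AA fin assms by (intro Min_antimono) auto
      then show ?thesis using True True2 by (simp add: phi_def phi'_def)
    next
      case False
      then show ?thesis using True by (simp add: phi_def phi'_def)
    qed
  qed
qed

definition flip :: "nat set \<Rightarrow> nat \<Rightarrow> nat set" where
  "flip z v = (if v \<in> z then z - {v} else insert v z)"

lemma improve_exists:
  assumes inv: "Inv n P" and nh: "\<not> hit n E w P" and wf: "wf_graph n E"
  shows "\<exists>z\<in>P. \<exists>v<n. phi n E w P < phi n E w (insert (flip z v) P)"
proof -
  have finP: "finite P" and neP: "P \<noteq> {}" and sub: "\<forall>x\<in>P. x \<subseteq> {..<n}"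
    using inv by (auto simp: Inv_def)
  let ?B = "card ` {x\<in>P. p1 n E w x}"
  show ?thesis
  proof (cases "?B = {}")
    case False
    have "Max ?B \<in> ?B" using False finP by (intro Max_in) auto
    then obtain z where z: "z \<in> P" "p1 n E w z" "card z = Max ?B" by auto
    have "\<not> target n E w z" using nh z by (auto simp: hit_def)
    from improve[OF wf _ _ this] z sub obtain v where v: "v \<in> Vx n z" "p1 n E w (insert v z)"
      by (auto simp: p1_def)
    have vz: "v \<notin> z" "v < n" using v by (auto simp: Vx_def)
    have fz: "finite z" using z sub finite_subset by blast
    have "flip z v = insert v z" using vz by (simp add: flip_def)
    let ?B' = "card ` {x\<in>insert (insert v z) P. p1 n E w x}"
    have "card (insert v z) \<in> ?B'" using v by auto
    then have "card (insert v z) \<le> Max ?B'" using finP by (intro Max_ge) auto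
    moreover have "card (insert v z) = Max ?B + 1" using vz fz z by simp
    ultimately have "phi n E w P < phi n E w (insert (insert v z) P)"
      using False \<open>card (insert v z) \<in> ?B'\<close> by (auto simp: phi_def phi'_def)
    then show ?thesis using z vz \<open>flip z v = insert v z\<close> by metis
  next
    case True
    have "Min (card ` P) \<in> card ` P" using neP finP by (intro Min_in) auto
    then obtain z where z: "z \<in> P" "card z = Min (card ` P)" by auto
    have "z \<noteq> {}" using True z p1_empty by auto
    then obtain v where vz: "v \<in> z" by auto
    have zs: "z \<subseteq> {..<n}" using z sub by auto
    then have vn: "v < n" using vz by auto
    have fz: "finite z" using zs finite_subset by blast
    have fl: "flip z v = z - {v}" using vz by (simp add: flip_def)
    have cz: "card (z - {v}) + 1 = card z" using vz fz
      by (metis card_Diff1_less card_Suc_Diff1 Suc_eq_plus1)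
    have "card z \<le> n" using zs card_sub_le by blast
    have "phi n E w P < phi n E w (insert (z - {v}) P)"
    proof (cases "p1 n E w (z - {v})")
      case True2: True
      then have "card ` {x\<in>insert (z - {v}) P. p1 n E w x} \<noteq> {}" by auto
      then show ?thesis using True by (simp add: phi_def phi'_def)
    next
      case False
      then have B': "card ` {x\<in>insert (z - {v}) P. p1 n E w x} = {}" using True by auto
      have "Min (card ` insert (z - {v}) P) \<le> card (z - {v})" using finP by (intro Min_le) auto
      then show ?thesis using True B' cz z \<open>card z \<le> n\<close> by (simp add: phi_def phi'_def)
    qed
    then show ?thesis using z vn fl by metis
  qed
qed




lemma pmf_bind_ge: "pmf M a * pmf (f a) y \<le> pmf (bind_pmf M f) y"
proof -
  have "ennreal (pmf M a * pmf (f a) y) = (\<integral>\<^sup>+x. ennreal (pmf (f a) y) * indicator {a} x \<partial>M)"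
    by (simp add: nn_integral_cmult_indicator emeasure_pmf_single ennreal_mult mult.commute)
  also have "\<dots> \<le> (\<integral>\<^sup>+x. pmf (f x) y \<partial>M)"
    by (intro nn_integral_mono) (auto simp: indicator_def)
  also have "\<dots> = pmf (bind_pmf M f) y" by (simp add: ennreal_pmf_bind)
  finally show ?thesis by (simp add: ennreal_le_iff)
qed

lemma pow_bound:
  assumes "n \<ge> (1::nat)" shows "1/3 \<le> (1 - 1 / real n) ^ (n - 1)"
proof (cases "n = 1")
  case True then show ?thesis by simp
next
  case False
  define m where "m = n - 1"
  have m: "m \<ge> 1" "real n = real m + 1" using False assms by (auto simp: m_def)
  have eq: "1 - 1 / real n = 1 / (1 + 1 / real m)" using m by (simp add: field_simps)
  have "(1 + 1 / real m) ^ m \<le> exp (1 / real m) ^ m"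
    by (intro power_mono) (auto simp: add.commute)
  also have "\<dots> = exp (real m * (1 / real m))" by (simp only: exp_of_nat_mult)
  also have "real m * (1 / real m) = 1" using m by simp
  also have "exp (1::real) \<le> 3" by (rule exp_le)
  finally have b: "(1 + 1 / real m) ^ m \<le> 3" .
  have pos: "0 < (1 + 1 / real m) ^ m" by (intro zero_less_power) (simp add: add_pos_nonneg)
  have "(1 - 1 / real n) ^ (n - 1) = 1 / (1 + 1 / real m) ^ m"
    by (simp add: eq m_def power_one_over)
  also have "\<dots> \<ge> 1/3" using b pos by (simp add: field_simps)
  finally show ?thesis .
qed

lemma flip_bits_pmf:
  assumes v: "v < n"
  shows "1 / (3 * real n) \<le> pmf (flip_bits n (\<lambda>i. 1 / real n) x) (flip x v)"
proof -
  have n1: "n \<ge> 1" using v by simp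
  define M where "M = Pi_pmf {..<n} False (\<lambda>i::nat. bernoulli_pmf (1 / real n))"
  define g where "g = (\<lambda>f::nat\<Rightarrow>bool. let F = {i. f i} in (x - F) \<union> (F - x))"
  define f0 where "f0 = (\<lambda>i::nat. i = v)"
  have gf0: "g f0 = flip x v" by (auto simp: g_def f0_def flip_def)
  have "pmf M f0 = (\<Prod>i\<in>{..<n}. pmf (bernoulli_pmf (1 / real n)) (f0 i))"
    unfolding M_def by (rule pmf_Pi') (auto simp: f0_def v)
  also have "\<dots> = pmf (bernoulli_pmf (1 / real n)) (f0 v) *
      (\<Prod>i\<in>{..<n} - {v}. pmf (bernoulli_pmf (1 / real n)) (f0 i))"
    using v by (subst prod.remove[of _ v]) auto
  also have "(\<Prod>i\<in>{..<n} - {v}. pmf (bernoulli_pmf (1 / real n)) (f0 i)) =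
      (\<Prod>i\<in>{..<n} - {v}. 1 - 1 / real n)"
    using n1 by (intro prod.cong) (auto simp: f0_def)
  also have "\<dots> = (1 - 1 / real n) ^ (n - 1)" using v by simp
  also have "pmf (bernoulli_pmf (1 / real n)) (f0 v) = 1 / real n" using n1 by (simp add: f0_def)
  finally have pm: "pmf M f0 = 1 / real n * (1 - 1 / real n) ^ (n - 1)" .
  have "1 / (3 * real n) = 1 / real n * (1/3)" by simp
  also have "\<dots> \<le> 1 / real n * (1 - 1 / real n) ^ (n - 1)"
    using pow_bound[OF n1] by (intro mult_left_mono) auto
  also have "\<dots> = measure M {f0}" using pm by (simp add: measure_pmf_single)
  also have "\<dots> \<le> measure M (g -` {flip x v})" using gf0
    by (intro measure_pmf.finite_measure_mono) auto
  also have "\<dots> = pmf (map_pmf g M) (flip x v)" by (simp add: pmf_map)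
  also have "map_pmf g M = flip_bits n (\<lambda>i. 1 / real n) x"
    unfolding flip_bits_def M_def g_def ..
  finally show ?thesis .
qed

lemma alt_pmf:
  assumes v: "v < n"
  shows "1 / (6 * real n) \<le> pmf (alt_mutation n E x) (flip x v)"
proof -
  have "1 / (6 * real n) = pmf (bernoulli_pmf (1/2)) False * (1 / (3 * real n))" by simp
  also have "\<dots> \<le> pmf (bernoulli_pmf (1/2)) False * pmf (flip_bits n (\<lambda>i. 1 / real n) x) (flip x v)"
    using flip_bits_pmf[OF v] by (intro mult_left_mono) auto
  also have "\<dots> \<le> pmf (alt_mutation n E x) (flip x v)"
    unfolding alt_mutation_def by (rule order_trans[OF _ pmf_bind_ge[where a=False]]) simp
  finally show ?thesis .
qed

lemma flip_bits_set:
  assumes "x \<subseteq> {..<n}" "x' \<in> set_pmf (flip_bits n p x)"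
  shows "x' \<subseteq> {..<n}"
proof -
  from assms(2) obtain f where f: "f \<in> set_pmf (Pi_pmf {..<n} False (\<lambda>i. bernoulli_pmf (p i)))"
    and x': "x' = (x - {i. f i}) \<union> ({i. f i} - x)"
    unfolding flip_bits_def by (auto simp: Let_def)
  have "\<And>i. i \<notin> {..<n} \<Longrightarrow> f i = False" using set_Pi_pmf_subset[OF finite_lessThan, of n False] f by blast
  then have "{i. f i} \<subseteq> {..<n}" by auto
  then show ?thesis using assms(1) x' by auto
qed

lemma alt_set:
  assumes "x \<subseteq> {..<n}" "x' \<in> set_pmf (alt_mutation n E x)"
  shows "x' \<subseteq> {..<n}"
proof -
  from assms(2) obtain b where
    b: "x' \<in> set_pmf (if b then flip_bits n (\<lambda>i. if incident E x i then 1/2 else 1 / real n) x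
                 else flip_bits n (\<lambda>i. 1 / real n) x)"
    unfolding alt_mutation_def by auto
  then show ?thesis by (cases b) (auto dest: flip_bits_set[OF assms(1)])
qed

lemma ea_set:
  assumes "Inv n P" "Q \<in> set_pmf (ea_step n E w sel P)"
  shows "\<exists>x\<in>P. \<exists>x'. x' \<subseteq> {..<n} \<and> Q = update n E w sel P x'"
proof -
  have "finite P" "P \<noteq> {}" using assms(1) by (auto simp: Inv_def)
  with assms(2) obtain x x' where "x \<in> P" "x' \<in> set_pmf (alt_mutation n E x)"
    "Q = update n E w sel P x'" unfolding ea_step_def by auto
  moreover have "x \<subseteq> {..<n}" using assms(1) \<open>x \<in> P\<close> by (auto simp: Inv_def)
  ultimately show ?thesis using alt_set by blast
qed

lemma ea_pmf:
  assumes inv: "Inv n P" and z: "z \<in> P" and v: "v < n"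
  shows "1 / (24 * real n ^ 2) \<le> pmf (ea_step n E w sel P) (update n E w sel P (flip z v))"
proof -
  have fin: "finite P" "P \<noteq> {}" using inv by (auto simp: Inv_def)
  have "card P \<le> 4 * n" using Inv_card[OF inv] v by presburger
  then have cP: "real (card P) \<le> 4 * real n" by (metis of_nat_le_iff of_nat_mult of_nat_numeral)
  have cP0: "card P > 0" using fin by (simp add: card_gt_0_iff)
  have "1 / (24 * real n ^ 2) \<le> 1 / real (card P) * (1 / (6 * real n))"
  proof -
    have "real (card P) * (6 * real n) \<le> 24 * real n ^ 2"
      using cP v by (simp add: power2_eq_square)
    then show ?thesis using cP0 v by (simp add: field_simps)
  qed
  also have "\<dots> \<le> pmf (pmf_of_set P) z * pmf (alt_mutation n E z) (flip z v)"
  proof -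
    have pz: "pmf (pmf_of_set P) z = 1 / real (card P)" using fin z by simp
    show ?thesis unfolding pz by (intro mult_left_mono alt_pmf[OF v]) simp
  qed
  also have "\<dots> \<le> pmf (pmf_of_set P) z * pmf (alt_mutation n E z \<bind> (\<lambda>x'. return_pmf (update n E w sel P x'))) (update n E w sel P (flip z v))"
    by (intro mult_left_mono order_trans[OF _ pmf_bind_ge[where a="flip z v"]]) auto
  also have "\<dots> \<le> pmf (ea_step n E w sel P) (update n E w sel P (flip z v))"
    unfolding ea_step_def by (rule pmf_bind_ge)
  finally show ?thesis .
qed




definition Kst where
  "Kst n E w sel P = (if hit n E w P then return_pmf P else ea_step n E w sel P)"

definition rf :: "nat \<Rightarrow> nat set set \<Rightarrow> (nat \<Rightarrow> nat) \<Rightarrow> nat set set \<Rightarrow> real" where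
  "rf n E w P = (if hit n E w P then 0 else 24 * real n ^ 2 * real (2 * n + 2 - phi n E w P))"

lemma rf_nonneg: "0 \<le> rf n E w P" by (simp add: rf_def)

lemma rf_le: "rf n E w P \<le> 24 * real n ^ 2 * real (2 * n + 2)"
  by (auto simp: rf_def intro!: mult_left_mono)

lemma stopped_Suc: "stopped_pop n E w sel (Suc t) = stopped_pop n E w sel t \<bind> Kst n E w sel"
  by (simp add: Kst_def[abs_def])

lemma step_ineq:
  assumes inv: "Inv n P" and n1: "n \<ge> 1" and wf: "wf_graph n E" and sel: "valid_sel sel"
  shows "(\<forall>Q\<in>set_pmf (Kst n E w sel P). Inv n Q) \<and>
         (\<integral>\<^sup>+Q. ennreal (rf n E w Q) \<partial>Kst n E w sel P) + indicator {P. \<not> hit n E w P} P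
            \<le> ennreal (rf n E w P)"
proof (cases "hit n E w P")
  case True
  then show ?thesis using inv by (simp add: Kst_def)
next
  case nh: False
  define D where "D = 24 * real n ^ 2"
  have Dpos: "D > 0" using n1 by (simp add: D_def)
  have finP: "finite P" "P \<noteq> {}" and subP: "\<forall>x\<in>P. x \<subseteq> {..<n}" using inv by (auto simp: Inv_def)
  have KP: "Kst n E w sel P = ea_step n E w sel P" using nh by (simp add: Kst_def)
  have phiP: "phi n E w P \<le> 2 * n + 1" using phi_bound subP finP by blast
  have supp: "Inv n Q \<and> phi n E w P \<le> phi n E w Q \<and> phi n E w Q \<le> 2 * n + 1"
    if Q: "Q \<in> set_pmf (ea_step n E w sel P)" for Q
  proof -
    from ea_set[OF inv Q] obtain x' where x': "x' \<subseteq> {..<n}" "Q = update n E w sel P x'" by blast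
    have "Inv n Q" using update_props(4)[OF inv x'(1) sel wf] x' by simp
    moreover have "phi n E w Q = phi n E w (insert x' P)"
      using phi_update[OF inv x'(1) sel wf] x' by simp
    moreover have "phi n E w P \<le> phi n E w (insert x' P)" using phi_mono finP subP by blast
    moreover have "phi n E w Q \<le> 2 * n + 1" using phi_bound \<open>Inv n Q\<close> by (auto simp: Inv_def)
    ultimately show ?thesis by simp
  qed
  define A where "A = {Q. phi n E w P < phi n E w Q}"
  have pt: "ennreal (rf n E w Q) + ennreal D * indicator A Q \<le> ennreal (rf n E w P)"
    if Q: "Q \<in> set_pmf (ea_step n E w sel P)" for Q
  proof -
    have s: "phi n E w P \<le> phi n E w Q" "phi n E w Q \<le> 2 * n + 1" using supp[OF Q] by auto
    have nat_ineq: "(if hit n E w Q then 0 else real (2 * n + 2 - phi n E w Q)) +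
                 (if phi n E w P < phi n E w Q then 1 else 0) \<le> real (2 * n + 2 - phi n E w P)"
      using s phiP by (auto simp: of_nat_diff)
    have "rf n E w Q + D * indicator A Q =
          D * ((if hit n E w Q then 0 else real (2 * n + 2 - phi n E w Q)) +
                 (if phi n E w P < phi n E w Q then 1 else 0))"
      by (simp add: rf_def D_def A_def indicator_def algebra_simps)
    also have "\<dots> \<le> D * real (2 * n + 2 - phi n E w P)"
      using nat_ineq Dpos by (intro mult_left_mono) auto
    also have "\<dots> = rf n E w P" using nh by (simp add: rf_def D_def)
    finally have "rf n E w Q + D * indicator A Q \<le> rf n E w P" .
    then have le: "ennreal (rf n E w Q + D * indicator A Q) \<le> ennreal (rf n E w P)"
      by (rule ennreal_leI)
    show ?thesis
    proof (cases "Q \<in> A")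
      case True
      with le have "ennreal (rf n E w Q + D) \<le> ennreal (rf n E w P)" by simp
      then show ?thesis using True Dpos rf_nonneg[of n E w Q] by (simp add: ennreal_plus)
    next
      case False with le show ?thesis by simp
    qed
  qed
  have int: "(\<integral>\<^sup>+Q. ennreal (rf n E w Q) \<partial>ea_step n E w sel P) + ennreal D * emeasure (ea_step n E w sel P) A
      \<le> ennreal (rf n E w P)"
  proof -
    have "(\<integral>\<^sup>+Q. ennreal (rf n E w Q) \<partial>ea_step n E w sel P) + ennreal D * emeasure (ea_step n E w sel P) A
        = (\<integral>\<^sup>+Q. ennreal (rf n E w Q) + ennreal D * indicator A Q \<partial>ea_step n E w sel P)"
      by (simp add: nn_integral_add nn_integral_cmult_indicator)
    also have "\<dots> \<le> (\<integral>\<^sup>+Q. ennreal (rf n E w P) \<partial>ea_step n E w sel P)"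
      by (intro nn_integral_mono_AE AE_pmfI pt)
    also have "\<dots> = ennreal (rf n E w P)" by (simp add: measure_pmf.emeasure_space_1)
    finally show ?thesis .
  qed
  have "1 \<le> ennreal D * emeasure (ea_step n E w sel P) A"
  proof -
    from improve_exists[OF inv nh wf] obtain z v where zv: "z \<in> P" "v < n"
      "phi n E w P < phi n E w (insert (flip z v) P)" by blast
    have fs: "flip z v \<subseteq> {..<n}" using zv subP by (auto simp: flip_def)
    define Q0 where "Q0 = update n E w sel P (flip z v)"
    have "Q0 \<in> A" using zv phi_update[OF inv fs sel wf] by (simp add: A_def Q0_def)
    have "ennreal (1 / D) \<le> ennreal (pmf (ea_step n E w sel P) Q0)"
      using ea_pmf[OF inv zv(1) zv(2)] by (intro ennreal_leI) (simp add: D_def Q0_def)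
    also have "\<dots> = emeasure (ea_step n E w sel P) {Q0}" by (simp add: emeasure_pmf_single)
    also have "\<dots> \<le> emeasure (ea_step n E w sel P) A" using \<open>Q0 \<in> A\<close> by (intro emeasure_mono) auto
    finally have "ennreal D * ennreal (1 / D) \<le> ennreal D * emeasure (ea_step n E w sel P) A"
      by (rule mult_left_mono) simp
    moreover have "ennreal D * ennreal (1 / D) = 1" using Dpos by (simp flip: ennreal_mult)
    ultimately show ?thesis by simp
  qed
  then have "(\<integral>\<^sup>+Q. ennreal (rf n E w Q) \<partial>ea_step n E w sel P) + 1 \<le> ennreal (rf n E w P)"
    using int by (meson add_left_mono order_trans)
  then show ?thesis using supp nh KP by simp
qed

lemma main_ind:
  assumes n1: "n \<ge> 1" and wf: "wf_graph n E" and sel: "valid_sel sel"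
  shows "(\<forall>P\<in>set_pmf (stopped_pop n E w sel t). Inv n P) \<and>
    (\<Sum>s<t. emeasure (measure_pmf (stopped_pop n E w sel s)) {P. \<not> hit n E w P}) +
    (\<integral>\<^sup>+P. ennreal (rf n E w P) \<partial>stopped_pop n E w sel t)
     \<le> (\<integral>\<^sup>+P. ennreal (rf n E w P) \<partial>stopped_pop n E w sel 0)"
proof (induction t)
  case 0
  have "\<forall>P\<in>set_pmf (stopped_pop n E w sel 0). Inv n P"
  proof
    fix P assume "P \<in> set_pmf (stopped_pop n E w sel 0)"
    moreover have "set_pmf (pmf_of_set (Pow {..<n::nat})) = Pow {..<n}" by (rule set_pmf_of_set) auto
    ultimately obtain x where x: "x \<subseteq> {..<n}" "P = {x}" by auto
    have "card {y\<in>{x}. card y = k} \<le> 2" for k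
      by (rule order_trans[OF card_mono[of "{x}"]]) auto
    then show "Inv n P" using x by (simp add: Inv_def)
  qed
  then show ?case by simp
next
  case (Suc t)
  let ?X = "stopped_pop n E w sel t"
  let ?V = "\<lambda>P. ennreal (rf n E w P)"
  let ?H = "{P. \<not> hit n E w P}"
  have invX: "\<forall>P\<in>set_pmf ?X. Inv n P" using Suc.IH by blast
  have si: "\<And>P. P \<in> set_pmf ?X \<Longrightarrow> (\<forall>Q\<in>set_pmf (Kst n E w sel P). Inv n Q) \<and>
      (\<integral>\<^sup>+Q. ?V Q \<partial>Kst n E w sel P) + indicator ?H P \<le> ?V P"
    using step_ineq[OF _ n1 wf sel] invX by blast
  have inv': "\<forall>P\<in>set_pmf (stopped_pop n E w sel (Suc t)). Inv n P"
  proof -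
    have "set_pmf (stopped_pop n E w sel (Suc t)) = (\<Union>P\<in>set_pmf ?X. set_pmf (Kst n E w sel P))"
      by (simp only: stopped_Suc set_bind_pmf)
    then show ?thesis using si by blast
  qed
  have "emeasure (measure_pmf ?X) ?H + (\<integral>\<^sup>+P. ?V P \<partial>stopped_pop n E w sel (Suc t))
      = (\<integral>\<^sup>+P. indicator ?H P \<partial>?X) + (\<integral>\<^sup>+P. (\<integral>\<^sup>+Q. ?V Q \<partial>Kst n E w sel P) \<partial>?X)"
    by (simp del: stopped_pop.simps add: stopped_Suc)
  also have "\<dots> = (\<integral>\<^sup>+P. (\<integral>\<^sup>+Q. ?V Q \<partial>Kst n E w sel P) + indicator ?H P \<partial>?X)"
    by (simp add: nn_integral_add add.commute)
  also have "\<dots> \<le> (\<integral>\<^sup>+P. ?V P \<partial>?X)"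
    by (intro nn_integral_mono_AE AE_pmfI) (use si in blast)
  finally have st: "emeasure (measure_pmf ?X) ?H + (\<integral>\<^sup>+P. ?V P \<partial>stopped_pop n E w sel (Suc t))
      \<le> (\<integral>\<^sup>+P. ?V P \<partial>?X)" .
  have "(\<Sum>s<Suc t. emeasure (measure_pmf (stopped_pop n E w sel s)) ?H) + (\<integral>\<^sup>+P. ?V P \<partial>stopped_pop n E w sel (Suc t))
     = (\<Sum>s<t. emeasure (measure_pmf (stopped_pop n E w sel s)) ?H) +
       (emeasure (measure_pmf ?X) ?H + (\<integral>\<^sup>+P. ?V P \<partial>stopped_pop n E w sel (Suc t)))"
    by (simp add: add.assoc)
  also have "\<dots> \<le> (\<Sum>s<t. emeasure (measure_pmf (stopped_pop n E w sel s)) ?H) + (\<integral>\<^sup>+P. ?V P \<partial>?X)"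
    using st by (rule add_left_mono)
  also have "\<dots> \<le> (\<integral>\<^sup>+P. ?V P \<partial>stopped_pop n E w sel 0)" using Suc.IH by blast
  finally show ?case using inv' by blast
qed

lemma main_bound:
  assumes n1: "n \<ge> 1" and wf: "wf_graph n E" and sel: "valid_sel sel"
  shows "expected_hitting_time n E w sel \<le> ennreal (96 * real n ^ 3)"
proof -
  let ?B = "ennreal (24 * real n ^ 2 * real (2 * n + 2))"
  have i0: "(\<integral>\<^sup>+P. ennreal (rf n E w P) \<partial>stopped_pop n E w sel 0) \<le> ?B"
  proof -
    have "(\<integral>\<^sup>+P. ennreal (rf n E w P) \<partial>stopped_pop n E w sel 0) \<le> (\<integral>\<^sup>+P. ?B \<partial>stopped_pop n E w sel 0)"
      by (intro nn_integral_mono ennreal_leI rf_le)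
    also have "\<dots> = ?B" by (simp add: measure_pmf.emeasure_space_1)
    finally show ?thesis .
  qed
  have "expected_hitting_time n E w sel \<le> ?B"
    unfolding expected_hitting_time_def
  proof (rule suminf_le_const[OF summableI])
    fix t
    have "(\<Sum>s<t. emeasure (measure_pmf (stopped_pop n E w sel s)) {P. \<not> hit n E w P})
       \<le> (\<Sum>s<t. emeasure (measure_pmf (stopped_pop n E w sel s)) {P. \<not> hit n E w P}) +
         (\<integral>\<^sup>+P. ennreal (rf n E w P) \<partial>stopped_pop n E w sel t)" by simp
    also have "\<dots> \<le> ?B" using main_ind[OF n1 wf sel, of w t] i0 by (meson order_trans)
    finally show "(\<Sum>s<t. emeasure (measure_pmf (stopped_pop n E w sel s)) {P. \<not> hit n E w P}) \<le> ?B" .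
  qed
  also have "?B \<le> ennreal (96 * real n ^ 3)"
  proof (rule ennreal_leI)
    have "real (2 * n + 2) \<le> 4 * real n" using n1 by simp
    then have "24 * real n ^ 2 * real (2 * n + 2) \<le> 24 * real n ^ 2 * (4 * real n)"
      by (intro mult_left_mono) auto
    then show "24 * real n ^ 2 * real (2 * n + 2) \<le> 96 * real n ^ 3"
      by (simp add: power2_eq_square power3_eq_cube)
  qed
  finally show ?thesis .
qed

theorem lemma10:
  "\<exists>C::real. C > 0 \<and>
     (\<forall>n E w sel. n \<ge> 1 \<longrightarrow> wf_graph n E \<longrightarrow> (\<forall>i<n. w i > 0) \<longrightarrow> valid_sel sel \<longrightarrow>
        expected_hitting_time n E w sel \<le> ennreal (C * real n ^ 3))"
  by (intro exI[of _ 96]) (auto intro: main_bound)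


end
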